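(* Let $R$ be a ring. Let $P$ be a polygon divided into subpolygons $P^1$ and $P^2$ by the dissection $\{(t,v),(v,t)\}$; let $V^\alpha$ be the vertex set of $P^\alpha$ and $U^\alpha=V^\alpha\setminus\{t,v\}$. Let $D^2$ be a dissection of $P^2$ and $D=\{(t,v),(v,t)\}\,\dot\cup\,D^2$. Let $c:\operatorname{diag}P\to R$ be a map with $c_{rs}\in R^*$ for all $(r,s)\in D$. Assume that $c|_{\operatorname{diag}P^2}$ satisfies the $T$-path formula with respect to $D^2$ (i.e. $c_{ik}=\sum_{p\in\mathscr{P}(D^2,i,k)}c_p$ for all distinct vertices $i,k$ of $P^2$, with $T$-paths taken in $P^2$), and that $c$ is a weak frieze with respect to $\{(t,v),(v,t)\}$. Then for all $i\in U^1$ and $k\in U^2$, \[ c_{ik}=\sum_{p\in\mathscr{P}(D,i,k)}c_p. \]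
   Context: $R^*$ denotes the invertible elements of $R$. A polygon is a finite set of at least three vertices with a cyclic ordering, thought of as a convex polygon in the plane; a subpolygon is a subset of at least three vertices with induced cyclic ordering. $\operatorname{diag}P$ is the set of ordered pairs of distinct vertices; internal diagonals are those whose endpoints are not neighbours. $(i,k)$ and $(j,\ell)$ cross if $i,j,k,\ell$ are pairwise distinct with $i<j<k<\ell$ or $i<\ell<k<j$ cyclically. A dissection is a set of internal diagonals closed under reversal with no two crossing; the pair $\{(t,v),(v,t)\}$ divides $P$ into the subpolygons $P^1,P^2$ whose vertex sets are the vertices on either side of $(t,v)$ together with $t,v$. Write $c_{ik}=c(i,k)$, $c_{xx}=0$. A map $c$ is a weak frieze with respect to a dissection $E$ if $c_{rs}\in R^*$ for $(r,s)\in E$ and whenever $(i,k)$ crosses $(r,s)$ with $(r,s),(s,r)\in E$, $c_{ik}=c_{ir}c_{sr}^{-1}c_{sk}+c_{is}c_{rs}^{-1}c_{rk}$. For a polygon $Q$ with dissection $D$, a sequence $(p_1,\ldots,p_\pi)$ of vertices of $Q$ is a $T$-path from $p_1$ to $p_\pi$ with respect to $D$ if: $p_1\ne p_\pi$; the sets $\{p_\alpha,p_{\alpha+1}\}$ are pairwise different 2-element sets; no $(p_\alpha,p_{\alpha+1})$ crosses a diagonal of $D$; each $(p_{2\alpha},p_{2\alpha+1})$ is in $D$ and crosses $(p_1,p_\pi)$, with crossing points progressing monotonically from $p_1$ to $p_\pi$. $\mathscr{P}(D,i,k)$ is the set of such $T$-paths from $i$ to $k$, and $c_p=c_{p_1p_2}c_{p_3p_2}^{-1}c_{p_3p_4}\cdots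 c_{p_{\pi-1}p_{\pi-2}}^{-1}c_{p_{\pi-1}p_\pi}$. *)

theory Defs
  imports Main
begin

text \<open>Polygon P is modelled with vertex set {0..<n}, n \<ge> 3, ordered cyclically by
  the natural order. Subpolygons are subsets S of {0..<n} with the induced cyclic order.\<close>

definition is_unit :: "'a::ring_1 \<Rightarrow> bool" where
  "is_unit x \<longleftrightarrow> (\<exists>y. x * y = 1 \<and> y * x = 1)"

definition rinv :: "'a::ring_1 \<Rightarrow> 'a" where
  "rinv x = (THE y. x * y = 1 \<and> y * x = 1)"

definition cbtw :: "nat \<Rightarrow> nat \<Rightarrow> nat \<Rightarrow> bool" where
  "cbtw a b c \<longleftrightarrow> (a < b \<and> b < c) \<or> (b < c \<and> c < a) \<or> (c < a \<and> a < b)"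

definition crosses :: "nat \<times> nat \<Rightarrow> nat \<times> nat \<Rightarrow> bool" where
  "crosses d e \<longleftrightarrow> (case d of (i,k) \<Rightarrow> case e of (j,l) \<Rightarrow>
     distinct [i,j,k,l] \<and> ((cbtw i j k \<and> cbtw k l i) \<or> (cbtw i l k \<and> cbtw k j i)))"

definition nbrs :: "nat set \<Rightarrow> nat \<Rightarrow> nat \<Rightarrow> bool" where
  "nbrs S x y \<longleftrightarrow> x \<in> S \<and> y \<in> S \<and> x \<noteq> y \<and>
     ((\<forall>w\<in>S. \<not> cbtw x w y) \<or> (\<forall>w\<in>S. \<not> cbtw y w x))"

definition internal_diag :: "nat set \<Rightarrow> nat \<times> nat \<Rightarrow> bool" where
  "internal_diag S d \<longleftrightarrow> fst d \<in> S \<and> snd d \<in> S \<and> fst d \<noteq> snd d \<and> \<not> nbrs S (fst d) (snd d)"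

definition dissection :: "nat set \<Rightarrow> (nat \<times> nat) set \<Rightarrow> bool" where
  "dissection S E \<longleftrightarrow> (\<forall>d\<in>E. internal_diag S d) \<and> (\<forall>(a,b)\<in>E. (b,a) \<in> E) \<and>
     (\<forall>d\<in>E. \<forall>e\<in>E. \<not> crosses d e)"

definition weak_frieze :: "nat \<Rightarrow> (nat \<times> nat) set \<Rightarrow> (nat \<Rightarrow> nat \<Rightarrow> 'a::ring_1) \<Rightarrow> bool" where
  "weak_frieze n E c \<longleftrightarrow> (\<forall>(r,s)\<in>E. is_unit (c r s)) \<and>
     (\<forall>i<n. \<forall>k<n. \<forall>r s. (r,s) \<in> E \<longrightarrow> (s,r) \<in> E \<longrightarrow> crosses (i,k) (r,s) \<longrightarrow>
        c i k = c i r * rinv (c s r) * c s k + c i s * rinv (c r s) * c r k)"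

definition up_end :: "nat \<Rightarrow> nat \<Rightarrow> nat \<times> nat \<Rightarrow> nat" where
  "up_end i k d = (if cbtw i (fst d) k then fst d else snd d)"
definition low_end :: "nat \<Rightarrow> nat \<Rightarrow> nat \<times> nat \<Rightarrow> nat" where
  "low_end i k d = (if cbtw i (fst d) k then snd d else fst d)"

text \<open>For two distinct non-crossing diagonals d1, d2, both crossing (i,k) (convex position),
  the crossing point of d1 with (i,k) is strictly closer to i than that of d2 iff
  d2 lies on the k-side of d1.\<close>
definition closer :: "nat \<Rightarrow> nat \<Rightarrow> nat \<times> nat \<Rightarrow> nat \<times> nat \<Rightarrow> bool" where
  "closer i k d1 d2 \<longleftrightarrow>
     (let a1 = up_end i k d1; b1 = low_end i k d1; a2 = up_end i k d2; b2 = low_end i k d2 in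
      (a2 = a1 \<or> cbtw a1 a2 k) \<and> (b2 = b1 \<or> cbtw k b2 b1) \<and> (a1, b1) \<noteq> (a2, b2))"

text \<open>T-paths (as lists, 0-based indices) in the subpolygon S with respect to dissection D.
  Paper index 2\<alpha>, 2\<alpha>+1 corresponds to list positions j, j+1 with j odd.\<close>
definition is_tpath :: "nat set \<Rightarrow> (nat \<times> nat) set \<Rightarrow> nat list \<Rightarrow> bool" where
  "is_tpath S D p \<longleftrightarrow> length p \<ge> 2 \<and> set p \<subseteq> S \<and> hd p \<noteq> last p \<and>
     (\<forall>j. j + 1 < length p \<longrightarrow> p ! j \<noteq> p ! (j+1)) \<and>
     inj_on (\<lambda>j. {p ! j, p ! (j+1)}) {j. j + 1 < length p} \<and>
     (\<forall>j. j + 1 < length p \<longrightarrow> (\<forall>d\<in>D. \<not> crosses (p ! j, p ! (j+1)) d)) \<and>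
     (\<forall>j. j + 1 < length p \<longrightarrow> odd j \<longrightarrow>
        (p ! j, p ! (j+1)) \<in> D \<and> crosses (p ! j, p ! (j+1)) (hd p, last p)) \<and>
     (\<forall>j1 j2. j1 < j2 \<longrightarrow> j2 + 1 < length p \<longrightarrow> odd j1 \<longrightarrow> odd j2 \<longrightarrow>
        closer (hd p) (last p) (p ! j1, p ! (j1+1)) (p ! j2, p ! (j2+1)))"

definition tpaths :: "nat set \<Rightarrow> (nat \<times> nat) set \<Rightarrow> nat \<Rightarrow> nat \<Rightarrow> nat list set" where
  "tpaths S D i k = {p. is_tpath S D p \<and> hd p = i \<and> last p = k}"

fun tcoef :: "(nat \<Rightarrow> nat \<Rightarrow> 'a::ring_1) \<Rightarrow> nat list \<Rightarrow> 'a" where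
  "tcoef c (a # b # x # rest) = c a b * rinv (c x b) * tcoef c (x # rest)"
| "tcoef c [a, b] = c a b"
| "tcoef c _ = 0"

definition side :: "nat \<Rightarrow> nat \<Rightarrow> nat \<Rightarrow> nat set" where
  "side n t v = {t, v} \<union> {w. w < n \<and> cbtw t w v}"

end

theory Submission
  imports Defs
begin

lemma natlt: "((m::nat) < n) = (int m < int n)" by simp
lemma nateq: "((m::nat) = n) = (int m = int n)" by simp

lemma cross_sym: "crosses d e = crosses e d"
  unfolding crosses_def cbtw_def by (simp only: split_beta fst_conv snd_conv natlt nateq distinct.simps list.set insert_iff empty_iff) (smt (z3))

lemma cross_swap: "crosses (a,b) e = crosses (b,a) e"
  unfolding crosses_def cbtw_def by (simp only: split_beta fst_conv snd_conv natlt nateq distinct.simps list.set insert_iff empty_iff) (smt (z3))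

lemma G_cross:
  assumes "cbtw t i v" "cbtw v k t"
  shows "crosses (i,k) (t,v)"
  using assms unfolding crosses_def cbtw_def prod.case distinct.simps list.set insert_iff empty_iff by (simp only: fst_conv snd_conv prod.inject natlt nateq) (smt (z3))

lemma G1:
  assumes "cbtw t i v" "cbtw v k t" "(x=t \<and> y=v) \<or> (x=v \<and> y=t)"
    and "a = v \<or> a = t \<or> cbtw v a t" "b = v \<or> b = t \<or> cbtw v b t"
    and "crosses (a,b) (y,k)"
  shows "crosses (a,b) (i,k)"
  using assms unfolding crosses_def cbtw_def prod.case distinct.simps list.set insert_iff empty_iff by (simp only: fst_conv snd_conv prod.inject natlt nateq) (smt (z3))

lemma G1':
  assumes "cbtw t i v" "cbtw v k t" "(x=t \<and> y=v) \<or> (x=v \<and> y=t)"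
    and "a = v \<or> a = t \<or> cbtw v a t" "b = v \<or> b = t \<or> cbtw v b t"
    and "crosses (a,b) (i,k)" "a \<noteq> y" "b \<noteq> y"
  shows "crosses (a,b) (y,k)"
  using assms unfolding crosses_def cbtw_def prod.case distinct.simps list.set insert_iff empty_iff by (simp only: fst_conv snd_conv prod.inject natlt nateq) (smt (z3))

lemma G2:
  assumes "cbtw t i v" "cbtw v k t" "(x=t \<and> y=v) \<or> (x=v \<and> y=t)"
    and "a = v \<or> a = t \<or> cbtw v a t" "b = v \<or> b = t \<or> cbtw v b t"
    and "crosses (a,b) (i,k)" "(a,b) \<noteq> (t,v)" "(a,b) \<noteq> (v,t)"
  shows "closer i k (x,y) (a,b)"
  using assms unfolding crosses_def closer_def up_end_def low_end_def Let_def cbtw_def prod.case distinct.simps list.set insert_iff empty_iff by (simp only: fst_conv snd_conv prod.inject natlt nateq) (smt (z3))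

lemma G3:
  assumes "cbtw t i v" "cbtw v k t" "(x=t \<and> y=v) \<or> (x=v \<and> y=t)"
    and "a = v \<or> a = t \<or> cbtw v a t" "a \<noteq> y" "a \<noteq> k"
  shows "cbtw y a k = cbtw i a k"
  using assms unfolding cbtw_def prod.case distinct.simps list.set insert_iff empty_iff by (simp only: fst_conv snd_conv prod.inject natlt nateq) (smt (z3))

lemma G5:
  assumes "a = v \<or> a = t \<or> cbtw v a t" "b = v \<or> b = t \<or> cbtw v b t"
  shows "\<not> crosses (a,b) (t,v)"
  using assms unfolding crosses_def cbtw_def prod.case distinct.simps list.set insert_iff empty_iff by (simp only: fst_conv snd_conv prod.inject natlt nateq) (smt (z3))

lemma G5':
  assumes "cbtw t i v" "(x=t \<and> y=v) \<or> (x=v \<and> y=t)"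
    "a = v \<or> a = t \<or> cbtw v a t" "b = v \<or> b = t \<or> cbtw v b t"
  shows "\<not> crosses (i,x) (a,b)"
  using assms unfolding crosses_def cbtw_def prod.case distinct.simps list.set insert_iff empty_iff by (simp only: fst_conv snd_conv prod.inject natlt nateq) (smt (z3))

lemma G6:
  assumes "cbtw t i v" "cbtw v k t" "(x=t \<and> y=v) \<or> (x=v \<and> y=t)"
    and "a1 = v \<or> a1 = t \<or> cbtw v a1 t" "b1 = v \<or> b1 = t \<or> cbtw v b1 t"
    and "a2 = v \<or> a2 = t \<or> cbtw v a2 t" "b2 = v \<or> b2 = t \<or> cbtw v b2 t"
    and "crosses (a1,b1) (i,k)" "crosses (a2,b2) (i,k)" "closer i k (a1,b1) (a2,b2)"
    "a1 \<noteq> y" "b1 \<noteq> y"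
  shows "a2 \<noteq> y \<and> b2 \<noteq> y"
  using assms unfolding crosses_def closer_def up_end_def low_end_def Let_def cbtw_def prod.case distinct.simps list.set insert_iff empty_iff by (simp only: fst_conv snd_conv prod.inject natlt nateq) (smt (z3))

lemma cross_distinct: "crosses (a,b) (c,d) \<Longrightarrow> distinct [a,c,b,d]"
  unfolding crosses_def by auto

lemma unit_rinv: assumes "is_unit (a::'a::ring_1)" shows "a * rinv a = 1 \<and> rinv a * a = 1"
proof -
  obtain b where b: "a * b = 1" "b * a = 1" using assms unfolding is_unit_def by auto
  have "rinv a = b" unfolding rinv_def
  proof (rule the_equality)
    show "a * b = 1 \<and> b * a = 1" using b by auto
    fix y assume y: "a * y = 1 \<and> y * a = 1"
    have "y = y * (a * b)" using b by simp
    also have "\<dots> = (y * a) * b" by (simp add: mult.assoc)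
    also have "\<dots> = b" using y by simp
    finally show "y = b" .
  qed
  then show ?thesis using b by simp
qed

lemma inj_cons:
  assumes "l \<noteq> []"
  shows "inj_on (\<lambda>j. {(a#l)!j, (a#l)!(j+1)}) {j. j+1 < length (a#l)} \<longleftrightarrow>
    inj_on (\<lambda>j. {l!j, l!(j+1)}) {j. j+1 < length l} \<and>
    (\<forall>j. j+1 < length l \<longrightarrow> {a, l!0} \<noteq> {l!j, l!(j+1)})"
proof
  assume A: "inj_on (\<lambda>j. {(a#l)!j, (a#l)!(j+1)}) {j. j+1 < length (a#l)}"
  show "inj_on (\<lambda>j. {l!j, l!(j+1)}) {j. j+1 < length l} \<and>
    (\<forall>j. j+1 < length l \<longrightarrow> {a, l!0} \<noteq> {l!j, l!(j+1)})"
  proof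
    show "inj_on (\<lambda>j. {l!j, l!(j+1)}) {j. j+1 < length l}"
    proof (rule inj_onI)
      fix j1 j2 assume "j1 \<in> {j. j+1 < length l}" "j2 \<in> {j. j+1 < length l}"
        "{l!j1, l!(j1+1)} = {l!j2, l!(j2+1)}"
      then have "Suc j1 = Suc j2" using inj_onD[OF A, of "Suc j1" "Suc j2"] by auto
      then show "j1 = j2" by simp
    qed
    show "\<forall>j. j+1 < length l \<longrightarrow> {a, l!0} \<noteq> {l!j, l!(j+1)}"
    proof (intro allI impI)
      fix j assume j: "j+1 < length l"
      show "{a, l!0} \<noteq> {l!j, l!(j+1)}"
      proof
        assume e: "{a, l!0} = {l!j, l!(j+1)}"
        have "(\<lambda>j. {(a#l)!j, (a#l)!(j+1)}) 0 = (\<lambda>j. {(a#l)!j, (a#l)!(j+1)}) (Suc j)"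
          using e by simp
        moreover have "0 \<in> {j. j+1 < length (a#l)}" using assms by simp
        moreover have "Suc j \<in> {j. j+1 < length (a#l)}" using j by simp
        ultimately have "0 = Suc j" using inj_onD[OF A] by blast
        then show False by simp
      qed
    qed
  qed
next
  assume B: "inj_on (\<lambda>j. {l!j, l!(j+1)}) {j. j+1 < length l} \<and>
    (\<forall>j. j+1 < length l \<longrightarrow> {a, l!0} \<noteq> {l!j, l!(j+1)})"
  show "inj_on (\<lambda>j. {(a#l)!j, (a#l)!(j+1)}) {j. j+1 < length (a#l)}"
  proof (rule inj_onI)
    fix j1 j2 assume j1: "j1 \<in> {j. j+1 < length (a#l)}" and j2: "j2 \<in> {j. j+1 < length (a#l)}"
      and e: "{(a#l)!j1, (a#l)!(j1+1)} = {(a#l)!j2, (a#l)!(j2+1)}"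
    show "j1 = j2"
    proof (cases j1)
      case 0
      then show ?thesis
      proof (cases j2)
        case (Suc m2)
        then show ?thesis using B j2 e 0 by auto
      qed simp
    next
      case (Suc m1)
      then show ?thesis
      proof (cases j2)
        case 0
        then show ?thesis using B j1 e Suc by (metis (no_types, lifting) One_nat_def Suc_less_eq add.right_neutral add_Suc_right length_Cons mem_Collect_eq nth_Cons_0 nth_Cons_Suc)
      next
        case (Suc m2)
        then show ?thesis using B j1 j2 e \<open>j1 = Suc m1\<close> inj_onD[of _ "{j. j+1 < length l}" m1 m2] by auto
      qed
    qed
  qed
qed


lemma finite_tpaths:
  assumes "finite S" shows "finite (tpaths S D a b)"
proof -
  have "tpaths S D a b \<subseteq> {xs. set xs \<subseteq> S \<and> length xs \<le> card (Pow S) + 1}"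
  proof
    fix p assume "p \<in> tpaths S D a b"
    then have tp: "is_tpath S D p" by (simp add: tpaths_def)
    then have inj: "inj_on (\<lambda>j. {p!j, p!(j+1)}) {j. j+1 < length p}" and sp: "set p \<subseteq> S"
      unfolding is_tpath_def by auto
    have "(\<lambda>j. {p!j, p!(j+1)}) ` {j. j+1 < length p} \<subseteq> Pow S"
    proof (rule image_subsetI)
      fix j assume "j \<in> {j. j+1 < length p}"
      then have "p!j \<in> set p" "p!(j+1) \<in> set p" by auto
      then show "{p!j, p!(j+1)} \<in> Pow S" using sp by auto
    qed
    then have "card ((\<lambda>j. {p!j, p!(j+1)}) ` {j. j+1 < length p}) \<le> card (Pow S)"
      using assms by (simp add: card_mono)
    moreover have "card ((\<lambda>j. {p!j, p!(j+1)}) ` {j. j+1 < length p}) = card {j. j+1 < length p}"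
      using inj by (simp add: card_image)
    moreover have "{j. j+1 < length p} = {..< length p - 1}" by auto
    ultimately have "length p - 1 \<le> card (Pow S)" by simp
    then show "p \<in> {xs. set xs \<subseteq> S \<and> length xs \<le> card (Pow S) + 1}" using sp by simp
  qed
  moreover have "finite {xs. set xs \<subseteq> S \<and> length xs \<le> card (Pow S) + 1}"
    using finite_lists_length_le[OF assms] by simp
  ultimately show ?thesis by (rule finite_subset)
qed

lemma tp_mid:
  assumes "is_tpath S D p" "0 < j" "j < length p"
  shows "p!j \<noteq> hd p"
proof (cases "j = length p - 1")
  case True
  have "p \<noteq> []" using assms by auto
  then have "p!j = last p" using True by (simp add: last_conv_nth)
  then show ?thesis using assms unfolding is_tpath_def by auto
next
  case False
  show ?thesis
  proof (cases "odd j")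
    case True
    then have "crosses (p!j, p!(j+1)) (hd p, last p)" using assms False unfolding is_tpath_def by auto
    then show ?thesis using cross_distinct by fastforce
  next
    case F: False
    obtain m where m: "j = Suc m" using assms(2) by (cases j) auto
    then have "odd m" using F by simp
    moreover have "m+1 < length p" using m assms by auto
    ultimately have "crosses (p!m, p!(m+1)) (hd p, last p)" using assms(1) unfolding is_tpath_def by blast
    then show ?thesis using cross_distinct m by fastforce
  qed
qed

lemma tpI:
  assumes "length p \<ge> 2" "set p \<subseteq> S" "hd p \<noteq> last p"
   "\<And>j. j+1 < length p \<Longrightarrow> p!j \<noteq> p!(j+1)"
   "inj_on (\<lambda>j. {p!j, p!(j+1)}) {j. j+1 < length p}"
   "\<And>j d. j+1 < length p \<Longrightarrow> d \<in> D \<Longrightarrow> \<not> crosses (p!j, p!(j+1)) d"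
   "\<And>j. j+1 < length p \<Longrightarrow> odd j \<Longrightarrow> (p!j, p!(j+1)) \<in> D \<and> crosses (p!j, p!(j+1)) (hd p, last p)"
   "\<And>j1 j2. j1 < j2 \<Longrightarrow> j2+1 < length p \<Longrightarrow> odd j1 \<Longrightarrow> odd j2 \<Longrightarrow>
      closer (hd p) (last p) (p!j1, p!(j1+1)) (p!j2, p!(j2+1))"
  shows "is_tpath S D p"
  using assms unfolding is_tpath_def by blast

lemma tp_len: "is_tpath S D p \<Longrightarrow> length p \<ge> 2" unfolding is_tpath_def by blast
lemma tp_set: "is_tpath S D p \<Longrightarrow> set p \<subseteq> S" unfolding is_tpath_def by blast
lemma tp_hl: "is_tpath S D p \<Longrightarrow> hd p \<noteq> last p" unfolding is_tpath_def by blast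
lemma tp_cons: "is_tpath S D p \<Longrightarrow> j+1 < length p \<Longrightarrow> p!j \<noteq> p!(j+1)" unfolding is_tpath_def by blast
lemma tp_inj: "is_tpath S D p \<Longrightarrow> inj_on (\<lambda>j. {p!j, p!(j+1)}) {j. j+1 < length p}" unfolding is_tpath_def by blast
lemma tp_injD: "is_tpath S D p \<Longrightarrow> j1+1 < length p \<Longrightarrow> j2+1 < length p \<Longrightarrow>
   {p!j1, p!(j1+1)} = {p!j2, p!(j2+1)} \<Longrightarrow> j1 = j2"
  using inj_onD[OF tp_inj, of S D p j1 j2] by auto
lemma tp_nc: "is_tpath S D p \<Longrightarrow> j+1 < length p \<Longrightarrow> d \<in> D \<Longrightarrow> \<not> crosses (p!j, p!(j+1)) d"
  unfolding is_tpath_def by blast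
lemma tp_odd: "is_tpath S D p \<Longrightarrow> j+1 < length p \<Longrightarrow> odd j \<Longrightarrow>
   (p!j, p!(j+1)) \<in> D \<and> crosses (p!j, p!(j+1)) (hd p, last p)"
  unfolding is_tpath_def by blast
lemma tp_cl: "is_tpath S D p \<Longrightarrow> j1 < j2 \<Longrightarrow> j2+1 < length p \<Longrightarrow> odd j1 \<Longrightarrow> odd j2 \<Longrightarrow>
      closer (hd p) (last p) (p!j1, p!(j1+1)) (p!j2, p!(j2+1))"
  unfolding is_tpath_def by blast

lemma tp_vert:
  assumes "is_tpath S D p" "0 < j" "j < length p" "j \<noteq> length p - 1"
  shows "\<exists>m. odd m \<and> m+1 < length p \<and> (p!m, p!(m+1)) \<in> D \<and> crosses (p!m, p!(m+1)) (hd p, last p)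
           \<and> (m = j \<or> m + 1 = j)"
proof (cases "odd j")
  case True
  then show ?thesis using tp_odd[OF assms(1), of j] assms by auto
next
  case False
  obtain m where m: "j = Suc m" using assms(2) by (cases j) auto
  then have "odd m" using False by simp
  moreover have "m+1 < length p" using m assms by auto
  ultimately show ?thesis using tp_odd[OF assms(1), of m] m by auto
qed

lemma last_nth: "length p \<ge> 2 \<Longrightarrow> p!(length p - 1) = last p"
  by (cases p) (auto simp: last_conv_nth)

locale L =
  fixes n t v i k :: nat and D2 :: "(nat \<times> nat) set"
  assumes tn: "t < n" and vn: "v < n" and ti: "cbtw t i v" and vk: "cbtw v k t"
    and iN: "i < n" and kN: "k < n" and dis: "dissection (side n v t) D2"
begin

abbreviation "P2 \<equiv> side n v t"
abbreviation "DA \<equiv> {(t,v),(v,t)} \<union> D2"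
abbreviation "XY x y \<equiv> (x = t \<and> y = v) \<or> (x = v \<and> y = t)"

lemma inP2: "a \<in> P2 \<Longrightarrow> a = v \<or> a = t \<or> cbtw v a t" by (auto simp: side_def)
lemma P2_sub: "P2 \<subseteq> {0..<n}" using tn vn by (auto simp: side_def)
lemma tP2: "t \<in> P2" and vP2: "v \<in> P2" by (auto simp: side_def)
lemma kP2: "k \<in> P2" using kN vk by (simp add: side_def)
lemma basic: "t \<noteq> v" "i \<noteq> t" "i \<noteq> v" "k \<noteq> t" "k \<noteq> v" "i \<noteq> k"
  using ti vk unfolding cbtw_def by auto
lemma i_notP2: "i \<notin> P2" using ti unfolding side_def cbtw_def by auto
lemma D2_P2: "(a,b) \<in> D2 \<Longrightarrow> a \<in> P2 \<and> b \<in> P2"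
  using dis unfolding dissection_def internal_diag_def by auto
lemma DA_P2: "(a,b) \<in> DA \<Longrightarrow> a \<in> P2 \<and> b \<in> P2"
  using D2_P2 tP2 vP2 by auto
lemma nb: "nbrs P2 t v" "nbrs P2 v t"
proof -
  have "\<forall>w\<in>P2. \<not> cbtw t w v" using inP2 unfolding cbtw_def by fastforce
  then show "nbrs P2 t v" "nbrs P2 v t" unfolding nbrs_def using tP2 vP2 basic by auto
qed
lemma tv_notD2: "(t,v) \<notin> D2" "(v,t) \<notin> D2"
  using dis nb unfolding dissection_def internal_diag_def by auto

lemma XY_P2: "XY x y \<Longrightarrow> x \<in> P2 \<and> y \<in> P2 \<and> x \<noteq> y \<and> x \<noteq> i \<and> y \<noteq> k \<and> x \<noteq> k \<and> y \<noteq> i \<and> (x,y) \<in> DA"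
  using tP2 vP2 basic by auto

lemma cr_ik: "XY x y \<Longrightarrow> crosses (x,y) (i,k)"
  using G_cross[OF ti vk] cross_sym cross_swap by metis
lemma cr_iw: "cbtw v w t \<Longrightarrow> crosses (i,w) (t,v)"
  using G_cross[OF ti] by blast
lemma L_G1: "XY x y \<Longrightarrow> a \<in> P2 \<Longrightarrow> b \<in> P2 \<Longrightarrow> crosses (a,b) (y,k) \<Longrightarrow> crosses (a,b) (i,k)"
  using G1[OF ti vk _ inP2 inP2] by blast
lemma L_G1': "XY x y \<Longrightarrow> a \<in> P2 \<Longrightarrow> b \<in> P2 \<Longrightarrow> crosses (a,b) (i,k) \<Longrightarrow> a \<noteq> y \<Longrightarrow> b \<noteq> y
   \<Longrightarrow> crosses (a,b) (y,k)"
  using G1'[OF ti vk _ inP2 inP2] by blast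
lemma L_G2: "XY x y \<Longrightarrow> a \<in> P2 \<Longrightarrow> b \<in> P2 \<Longrightarrow> crosses (a,b) (i,k) \<Longrightarrow> (a,b) \<in> D2
   \<Longrightarrow> closer i k (x,y) (a,b)"
  using G2[OF ti vk _ inP2 inP2] tv_notD2 by metis
lemma L_G3: "XY x y \<Longrightarrow> a1 \<in> P2 \<Longrightarrow> a2 \<in> P2 \<Longrightarrow> a1 \<noteq> y \<Longrightarrow> a1 \<noteq> k \<Longrightarrow> a2 \<noteq> y \<Longrightarrow> a2 \<noteq> k
   \<Longrightarrow> b1 \<noteq> y \<Longrightarrow> b1 \<noteq> k \<Longrightarrow> b2 \<noteq> y \<Longrightarrow> b2 \<noteq> k \<Longrightarrow> b1 \<in> P2 \<Longrightarrow> b2 \<in> P2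
   \<Longrightarrow> closer y k (a1,b1) (a2,b2) = closer i k (a1,b1) (a2,b2)"
proof -
  assume xy: "XY x y" and h: "a1 \<in> P2" "a2 \<in> P2" "a1 \<noteq> y" "a1 \<noteq> k" "a2 \<noteq> y" "a2 \<noteq> k"
  have e1: "cbtw y a1 k = cbtw i a1 k" using G3[OF ti vk xy inP2[OF h(1)] h(3) h(4)] .
  have e2: "cbtw y a2 k = cbtw i a2 k" using G3[OF ti vk xy inP2[OF h(2)] h(5) h(6)] .
  show ?thesis unfolding closer_def up_end_def low_end_def Let_def fst_conv snd_conv e1 e2 ..
qed
lemma NC: "a \<in> P2 \<Longrightarrow> b \<in> P2 \<Longrightarrow> (c,e) \<in> {(t,v),(v,t)} \<Longrightarrow> \<not> crosses (a,b) (c,e) \<and> \<not> crosses (c,e) (a,b)"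
proof -
  assume a: "a \<in> P2" "b \<in> P2" "(c,e) \<in> {(t,v),(v,t)}"
  have n1: "\<not> crosses (a,b) (t,v)" using G5[OF inP2[OF a(1)] inP2[OF a(2)]] .
  have n2: "\<not> crosses (a,b) (v,t)" using n1 cross_sym cross_swap by metis
  show ?thesis using a(3) n1 n2 cross_sym by auto
qed
lemma L_G5': "XY x y \<Longrightarrow> a \<in> P2 \<Longrightarrow> b \<in> P2 \<Longrightarrow> \<not> crosses (i,x) (a,b)"
  using G5'[OF ti _ inP2 inP2] by blast
lemma L_G6: "XY x y \<Longrightarrow> a1 \<in> P2 \<Longrightarrow> b1 \<in> P2 \<Longrightarrow> a2 \<in> P2 \<Longrightarrow> b2 \<in> P2 \<Longrightarrow>
  crosses (a1,b1) (i,k) \<Longrightarrow> crosses (a2,b2) (i,k) \<Longrightarrow> closer i k (a1,b1) (a2,b2) \<Longrightarrow>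
  a1 \<noteq> y \<Longrightarrow> b1 \<noteq> y \<Longrightarrow> a2 \<noteq> y \<and> b2 \<noteq> y"
  using G6[OF ti vk _ inP2 inP2 inP2 inP2] by blast

lemma DA_D2: "(a,b) \<in> DA \<Longrightarrow> XY x y \<Longrightarrow> a \<noteq> y \<Longrightarrow> b \<noteq> y \<Longrightarrow> (a,b) \<in> D2"
  by auto

end

context L begin

definition gg :: "nat \<Rightarrow> nat list \<Rightarrow> nat list" where
  "gg x q = (if q!1 = x then i # tl q else i # x # q)"
definition hh :: "nat \<Rightarrow> nat list \<Rightarrow> nat list" where
  "hh y p = (if p!2 = y then drop 2 p else y # tl p)"

lemma fwd:
  assumes xy: "XY x y" and q: "q \<in> tpaths P2 D2 y k"
  shows "gg x q \<in> tpaths {0..<n} DA i k \<and> (gg x q)!1 = x"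
proof -
  from q have tq: "is_tpath P2 D2 q" and hq: "hd q = y" and lq: "last q = k"
    by (auto simp: tpaths_def)
  have lenq: "length q \<ge> 2" using tp_len[OF tq] .
  obtain r where qr: "q = y # r" using hq lenq by (cases q) auto
  have rne: "r \<noteq> []" using lenq qr by auto
  have qP2: "\<And>j. j < length q \<Longrightarrow> q!j \<in> P2" using tp_set[OF tq] nth_mem by blast
  have xyf: "x \<in> P2" "y \<in> P2" "x \<noteq> y" "x \<noteq> i" "y \<noteq> k" "x \<noteq> k" "(x,y) \<in> DA"
    using XY_P2[OF xy] by auto
  have iP: "i \<notin> P2" by (rule i_notP2)
  have ik: "i \<noteq> k" using basic by auto
  have qodd: "\<And>j. j+1 < length q \<Longrightarrow> odd j \<Longrightarrow> (q!j, q!(j+1)) \<in> D2 \<and> crosses (q!j, q!(j+1)) (y,k)"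
    using tp_odd[OF tq] hq lq by auto
  have qodd2: "\<And>j. j+1 < length q \<Longrightarrow> odd j \<Longrightarrow> crosses (q!j, q!(j+1)) (i,k)"
    using qodd qP2 L_G1[OF xy] by (meson add_lessD1)
  have qoddne: "\<And>j. j+1 < length q \<Longrightarrow> odd j \<Longrightarrow> q!j \<noteq> y \<and> q!j \<noteq> k \<and> q!(j+1) \<noteq> y \<and> q!(j+1) \<noteq> k"
    using qodd cross_distinct by fastforce
  have qcl: "\<And>j1 j2. j1 < j2 \<Longrightarrow> j2+1 < length q \<Longrightarrow> odd j1 \<Longrightarrow> odd j2 \<Longrightarrow>
      closer i k (q!j1, q!(j1+1)) (q!j2, q!(j2+1))"
  proof -
    fix j1 j2 assume a: "j1 < j2" "j2+1 < length q" "odd j1" "odd j2"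
    have "closer y k (q!j1, q!(j1+1)) (q!j2, q!(j2+1))" using tp_cl[OF tq a] hq lq by simp
    moreover have "closer y k (q!j1, q!(j1+1)) (q!j2, q!(j2+1)) = closer i k (q!j1, q!(j1+1)) (q!j2, q!(j2+1))"
    proof -
      have j1l: "j1+1 < length q" using a by simp
      have n1: "q!j1 \<noteq> y \<and> q!j1 \<noteq> k \<and> q!(j1+1) \<noteq> y \<and> q!(j1+1) \<noteq> k" using qoddne[OF j1l a(3)] .
      have n2: "q!j2 \<noteq> y \<and> q!j2 \<noteq> k \<and> q!(j2+1) \<noteq> y \<and> q!(j2+1) \<noteq> k" using qoddne[OF a(2) a(4)] .
      have p1: "q!j1 \<in> P2" "q!(j1+1) \<in> P2" "q!j2 \<in> P2" "q!(j2+1) \<in> P2" using qP2 j1l a(2) by auto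
      show ?thesis using L_G3[OF xy p1(1) p1(3)] n1 n2 p1 by blast
    qed
    ultimately show "closer i k (q!j1, q!(j1+1)) (q!j2, q!(j2+1))" by simp
  qed
  have qnc: "\<And>j d. j+1 < length q \<Longrightarrow> d \<in> DA \<Longrightarrow> \<not> crosses (q!j, q!(j+1)) d"
  proof -
    fix j d assume a: "j+1 < length q" "d \<in> DA"
    show "\<not> crosses (q!j, q!(j+1)) d"
    proof (cases "d \<in> D2")
      case True then show ?thesis using tp_nc[OF tq a(1)] by blast
    next
      case False
      then obtain c e where "d = (c,e)" "(c,e) \<in> {(t,v),(v,t)}" using a(2) by auto
      then show ?thesis using NC qP2 a(1) by (meson add_lessD1)
    qed
  qed
  have setr: "set r \<subseteq> P2" using tp_set[OF tq] qr by auto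
  show ?thesis
  proof (cases "q!1 = x")
    case True
    define p where "p = i # r"
    have gq: "gg x q = p" using True qr by (simp add: gg_def p_def)
    have lp: "length p = length q" by (simp add: p_def qr)
    have hp: "hd p = i" by (simp add: p_def)
    have lastp: "last p = k" using lq qr rne by (simp add: p_def)
    have pS: "\<And>j. p!(Suc j) = q!(Suc j)" by (simp add: p_def qr)
    have "is_tpath {0..<n} DA p"
    proof (rule tpI)
      show "length p \<ge> 2" using lp lenq by simp
      show "set p \<subseteq> {0..<n}" using setr P2_sub iN by (auto simp: p_def)
      show "hd p \<noteq> last p" using hp lastp ik by simp
    next
      fix j assume j: "j+1 < length p"
      show "p!j \<noteq> p!(j+1)"
      proof (cases j)
        case 0 then show ?thesis using True xyf qr by (simp add: p_def)
      next
        case (Suc m) then show ?thesis using tp_cons[OF tq, of j] j lp pS by simp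
      qed
    next
      have "inj_on (\<lambda>j. {r!j, r!(j+1)}) {j. j+1 < length r}"
        using tp_inj[OF tq] inj_cons[OF rne, of y] qr by simp
      moreover have "\<forall>j. j+1 < length r \<longrightarrow> {i, r!0} \<noteq> {r!j, r!(j+1)}"
      proof (intro allI impI)
        fix j assume "j+1 < length r"
        then have "r!j \<in> set r" "r!(j+1) \<in> set r" by auto
        then have "r!j \<in> P2" "r!(j+1) \<in> P2" using setr by auto
        show "{i, r!0} \<noteq> {r!j, r!(j+1)}"
        proof
          assume e: "{i, r!0} = {r!j, r!(j+1)}"
          then have "i \<in> {r!j, r!(j+1)}" by (metis insertI1)
          then show False using \<open>r!j \<in> P2\<close> \<open>r!(j+1) \<in> P2\<close> iP by auto
        qed
      qed
      ultimately show "inj_on (\<lambda>j. {p!j, p!(j+1)}) {j. j+1 < length p}"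
        using inj_cons[OF rne, of i] by (simp add: p_def)
    next
      fix j d assume j: "j+1 < length p" and d: "d \<in> DA"
      show "\<not> crosses (p!j, p!(j+1)) d"
      proof (cases j)
        case 0
        obtain a b where ab: "d = (a,b)" by (cases d)
        have "p!0 = i" "p!1 = x" using True qr by (auto simp: p_def)
        then show ?thesis using L_G5'[OF xy] DA_P2 d ab 0 by auto
      next
        case (Suc m) then show ?thesis using qnc[of j d] j d lp pS by simp
      qed
    next
      fix j assume j: "j+1 < length p" "odd j"
      then obtain m where m: "j = Suc m" by (cases j) auto
      show "(p!j, p!(j+1)) \<in> DA \<and> crosses (p!j, p!(j+1)) (hd p, last p)"
        using qodd[of j] qodd2[of j] j lp pS m hp lastp by auto
    next
      fix j1 j2 assume a: "j1 < j2" "j2+1 < length p" "odd j1" "odd j2"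
      then obtain m1 m2 where m: "j1 = Suc m1" "j2 = Suc m2" by (cases j1; cases j2) auto
      show "closer (hd p) (last p) (p!j1, p!(j1+1)) (p!j2, p!(j2+1))"
        using qcl[OF a(1) _ a(3) a(4)] a(2) lp pS m hp lastp by simp
    qed
    then show ?thesis using gq hp lastp True qr by (auto simp: tpaths_def p_def)
  next
    case False
    define p where "p = i # x # q"
    have gq: "gg x q = p" using False by (simp add: gg_def p_def)
    have lp: "length p = length q + 2" by (simp add: p_def)
    have hp: "hd p = i" by (simp add: p_def)
    have lastp: "last p = k" using lq qr by (simp add: p_def)
    have pS: "\<And>j. p!(Suc (Suc j)) = q!j" by (simp add: p_def)
    have "is_tpath {0..<n} DA p"
    proof (rule tpI)
      show "length p \<ge> 2" using lp lenq by simp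
      show "set p \<subseteq> {0..<n}" using setr P2_sub iN xyf qr by (auto simp: p_def)
      show "hd p \<noteq> last p" using hp lastp ik by simp
    next
      fix j assume j: "j+1 < length p"
      show "p!j \<noteq> p!(j+1)"
      proof (cases j)
        case 0 then show ?thesis using xyf by (simp add: p_def)
      next
        case (Suc m) note m = this
        show ?thesis
        proof (cases m)
          case 0 then show ?thesis using m xyf qr by (simp add: p_def)
        next
          case (Suc m') then show ?thesis using tp_cons[OF tq, of m'] j lp pS m by simp
        qed
      qed
    next
      have qne: "q \<noteq> []" using qr by simp
      have "inj_on (\<lambda>j. {q!j, q!(j+1)}) {j. j+1 < length q}" using tp_inj[OF tq] .
      moreover have "\<forall>j. j+1 < length q \<longrightarrow> {x, q!0} \<noteq> {q!j, q!(j+1)}"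
      proof (intro allI impI)
        fix j assume j: "j+1 < length q"
        show "{x, q!0} \<noteq> {q!j, q!(j+1)}"
        proof (cases j)
          case 0 then show ?thesis using False xyf qr by (auto simp: doubleton_eq_iff)
        next
          case (Suc m)
          have "q!j \<noteq> y" "q!(j+1) \<noteq> y" using tp_mid[OF tq] hq j Suc by auto
          then show ?thesis using qr by (auto simp: doubleton_eq_iff)
        qed
      qed
      ultimately have i1: "inj_on (\<lambda>j. {(x#q)!j, (x#q)!(j+1)}) {j. j+1 < length (x#q)}"
        using inj_cons[OF qne, of x] by simp
      have "\<forall>j. j+1 < length (x#q) \<longrightarrow> {i, (x#q)!0} \<noteq> {(x#q)!j, (x#q)!(j+1)}"
      proof (intro allI impI)
        fix j assume "j+1 < length (x#q)"
        moreover have sx: "set (x#q) \<subseteq> P2" using setr xyf qr by auto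
        ultimately have "(x#q)!j \<in> P2" "(x#q)!(j+1) \<in> P2" by (meson nth_mem subsetD add_lessD1)+
        show "{i, (x#q)!0} \<noteq> {(x#q)!j, (x#q)!(j+1)}"
        proof
          assume e: "{i, (x#q)!0} = {(x#q)!j, (x#q)!(j+1)}"
          then have "i \<in> {(x#q)!j, (x#q)!(j+1)}" by (metis insertI1)
          then show False using \<open>(x#q)!j \<in> P2\<close> \<open>(x#q)!(j+1) \<in> P2\<close> iP by auto
        qed
      qed
      then show "inj_on (\<lambda>j. {p!j, p!(j+1)}) {j. j+1 < length p}"
        using i1 inj_cons[of "x#q" i] by (simp add: p_def)
    next
      fix j d assume j: "j+1 < length p" and d: "d \<in> DA"
      obtain a b where ab: "d = (a,b)" by (cases d)
      have abP: "a \<in> P2" "b \<in> P2" using DA_P2 d ab by auto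
      show "\<not> crosses (p!j, p!(j+1)) d"
      proof (cases j)
        case 0
        then show ?thesis using L_G5'[OF xy abP] ab by (simp add: p_def)
      next
        case (Suc m) note m = this
        show ?thesis
        proof (cases m)
          case 0
          have "(x,y) \<in> {(t,v),(v,t)}" using xy by auto
          then have "\<not> crosses (x,y) (a,b)" using NC[OF abP] by blast
          then show ?thesis using m 0 ab qr by (simp add: p_def)
        next
          case (Suc m') then show ?thesis using qnc[of m' d] j d lp pS m by simp
        qed
      qed
    next
      fix j assume j: "j+1 < length p" "odd j"
      then obtain m where m: "j = Suc m" by (cases j) auto
      show "(p!j, p!(j+1)) \<in> DA \<and> crosses (p!j, p!(j+1)) (hd p, last p)"
      proof (cases m)
        case 0 then show ?thesis using m xyf cr_ik[OF xy] hp lastp qr by (simp add: p_def)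
      next
        case (Suc m')
        then have "odd m'" "m'+1 < length q" using j m lp by auto
        then show ?thesis using qodd[of m'] qodd2[of m'] m Suc pS hp lastp by auto
      qed
    next
      fix j1 j2 assume a: "j1 < j2" "j2+1 < length p" "odd j1" "odd j2"
      then obtain m1 where m1: "j1 = Suc m1" by (cases j1) auto
      obtain m2' where m2: "j2 = Suc (Suc m2')" using a m1 by (cases j2; cases "j2 - 1") auto
      have o2: "odd m2'" "m2'+1 < length q" using a m2 lp by auto
      show "closer (hd p) (last p) (p!j1, p!(j1+1)) (p!j2, p!(j2+1))"
      proof (cases m1)
        case 0
        have e2: "(q!m2', q!(m2'+1)) \<in> D2" using qodd[OF o2(2) o2(1)] by simp
        have "closer i k (x,y) (q!m2', q!(m2'+1))"
          using L_G2[OF xy _ _ qodd2[OF o2(2) o2(1)] e2] qP2 o2 by simp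
        then show ?thesis using m1 0 m2 hp lastp qr by (simp add: p_def)
      next
        case (Suc m1')
        have "closer i k (q!m1', q!(m1'+1)) (q!m2', q!(m2'+1))"
          using qcl[of m1' m2'] a m1 m2 Suc o2 by simp
        then show ?thesis using m1 Suc m2 hp lastp by (simp add: p_def)
      qed
    qed
    then show ?thesis using gq hp lastp by (auto simp: tpaths_def p_def)
  qed
qed

end

context L begin

lemma VP2:
  assumes tp: "is_tpath S DA p" and lp: "last p = k" and j: "0 < j" "j < length p"
  shows "p!j \<in> P2"
proof (cases "j = length p - 1")
  case True
  then show ?thesis using last_nth[OF tp_len[OF tp]] lp kP2 by simp
next
  case False
  then obtain m where "(p!m, p!(m+1)) \<in> DA" "m = j \<or> m+1 = j"
    using tp_vert[OF tp j False] by blast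
  then show ?thesis using DA_P2 by blast
qed

lemma len3:
  assumes p: "p \<in> tpaths {0..<n} DA i k"
  shows "length p \<ge> 3"
proof (rule ccontr)
  assume "\<not> length p \<ge> 3"
  moreover have tp: "is_tpath {0..<n} DA p" and hp: "hd p = i" and lp: "last p = k"
    using p by (auto simp: tpaths_def)
  ultimately have l2: "length p = 2" using tp_len[OF tp] by simp
  then obtain a b where "p = [a,b]" by (cases p; cases "tl p") auto
  then have "p!0 = i" "p!1 = k" using hp lp by auto
  then have "\<not> crosses (i,k) (t,v)" using tp_nc[OF tp, of 0 "(t,v)"] l2 by auto
  then show False using G_cross[OF ti vk] by blast
qed

lemma second_vertex:
  assumes p: "p \<in> tpaths {0..<n} DA i k"
  shows "p!1 = t \<or> p!1 = v"
proof -
  have tp: "is_tpath {0..<n} DA p" and hp: "hd p = i" and lp: "last p = k"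
    using p by (auto simp: tpaths_def)
  have l3: "length p \<ge> 3" using len3[OF p] .
  have p0: "p!0 = i" using hp l3 by (cases p) auto
  have "p!1 \<in> P2" using VP2[OF tp lp] l3 by auto
  moreover have "\<not> crosses (p!0, p!1) (t,v)" using tp_nc[OF tp, of 0 "(t,v)"] l3 by auto
  ultimately show ?thesis using cr_iw[of "p!1"] inP2 p0 by blast
qed

lemma bwd:
  assumes xy: "XY x y" and p: "p \<in> tpaths {0..<n} DA i k" and p1: "p!1 = x"
  shows "hh y p \<in> tpaths P2 D2 y k \<and> gg x (hh y p) = p"
proof -
  have tp: "is_tpath {0..<n} DA p" and hp: "hd p = i" and lp: "last p = k"
    using p by (auto simp: tpaths_def)
  have l3: "length p \<ge> 3" using len3[OF p] .
  have xyf: "x \<in> P2" "y \<in> P2" "x \<noteq> y" "x \<noteq> i" "y \<noteq> k" "x \<noteq> k" "(x,y) \<in> DA"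
    using XY_P2[OF xy] by auto
  obtain z r where pr: "p = i # x # z # r" using l3 hp p1
    by (cases p; cases "tl p"; cases "tl (tl p)") auto
  have pP2: "\<And>j. 0 < j \<Longrightarrow> j < length p \<Longrightarrow> p!j \<in> P2" using VP2[OF tp lp] by blast
  have podd: "\<And>j. j+1 < length p \<Longrightarrow> odd j \<Longrightarrow> (p!j, p!(j+1)) \<in> DA \<and> crosses (p!j, p!(j+1)) (i,k)"
    using tp_odd[OF tp] hp lp by auto
  have poddP: "\<And>j. j+1 < length p \<Longrightarrow> odd j \<Longrightarrow> p!j \<in> P2 \<and> p!(j+1) \<in> P2"
    using podd DA_P2 by blast
  have poddk: "\<And>j. j+1 < length p \<Longrightarrow> odd j \<Longrightarrow> p!j \<noteq> k \<and> p!(j+1) \<noteq> k"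
    using podd cross_distinct by fastforce
  have pcl: "\<And>j1 j2. j1 < j2 \<Longrightarrow> j2+1 < length p \<Longrightarrow> odd j1 \<Longrightarrow> odd j2 \<Longrightarrow>
      closer i k (p!j1, p!(j1+1)) (p!j2, p!(j2+1))"
    using tp_cl[OF tp] hp lp by auto
  have G6e: "\<And>m j. m < j \<Longrightarrow> j+1 < length p \<Longrightarrow> odd m \<Longrightarrow> odd j \<Longrightarrow> p!m \<noteq> y \<Longrightarrow> p!(m+1) \<noteq> y
     \<Longrightarrow> p!j \<noteq> y \<and> p!(j+1) \<noteq> y"
  proof -
    fix m j assume a: "m < j" "j+1 < length p" "odd m" "odd j" "p!m \<noteq> y" "p!(m+1) \<noteq> y"
    have ml: "m+1 < length p" using a by simp
    show "p!j \<noteq> y \<and> p!(j+1) \<noteq> y"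
      using L_G6[OF xy conjunct1[OF poddP[OF ml a(3)]] conjunct2[OF poddP[OF ml a(3)]]
          conjunct1[OF poddP[OF a(2) a(4)]] conjunct2[OF poddP[OF a(2) a(4)]]
          conjunct2[OF podd[OF ml a(3)]] conjunct2[OF podd[OF a(2) a(4)]] pcl[OF a(1) a(2) a(3) a(4)] a(5) a(6)] .
  qed
  have toD2: "\<And>j. j+1 < length p \<Longrightarrow> odd j \<Longrightarrow> p!j \<noteq> y \<Longrightarrow> p!(j+1) \<noteq> y \<Longrightarrow> (p!j, p!(j+1)) \<in> D2"
    using podd xy by blast
  have toyk: "\<And>j. j+1 < length p \<Longrightarrow> odd j \<Longrightarrow> p!j \<noteq> y \<Longrightarrow> p!(j+1) \<noteq> y \<Longrightarrow> crosses (p!j, p!(j+1)) (y,k)"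
    using podd poddP L_G1'[OF xy] by blast
  have clyk: "\<And>j1 j2. j1 < j2 \<Longrightarrow> j2+1 < length p \<Longrightarrow> odd j1 \<Longrightarrow> odd j2 \<Longrightarrow>
      p!j1 \<noteq> y \<Longrightarrow> p!(j1+1) \<noteq> y \<Longrightarrow> p!j2 \<noteq> y \<Longrightarrow> p!(j2+1) \<noteq> y \<Longrightarrow>
      closer y k (p!j1, p!(j1+1)) (p!j2, p!(j2+1))"
  proof -
    fix j1 j2 assume a: "j1 < j2" "j2+1 < length p" "odd j1" "odd j2"
      "p!j1 \<noteq> y" "p!(j1+1) \<noteq> y" "p!j2 \<noteq> y" "p!(j2+1) \<noteq> y"
    have j1l: "j1+1 < length p" using a by simp
    have P: "p!j1 \<in> P2" "p!(j1+1) \<in> P2" "p!j2 \<in> P2" "p!(j2+1) \<in> P2"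
      using poddP[OF j1l a(3)] poddP[OF a(2) a(4)] by auto
    have K: "p!j1 \<noteq> k" "p!(j1+1) \<noteq> k" "p!j2 \<noteq> k" "p!(j2+1) \<noteq> k"
      using poddk[OF j1l a(3)] poddk[OF a(2) a(4)] by auto
    show "closer y k (p!j1, p!(j1+1)) (p!j2, p!(j2+1))"
      using L_G3[OF xy P(1) P(3) a(5) K(1) a(7) K(3) a(6) K(2) a(8) K(4) P(2) P(4)] pcl[OF a(1-4)] by blast
  qed
  show ?thesis
  proof (cases "z = y")
    case True
    have l4: "length p \<ge> 4"
    proof (rule ccontr)
      assume "\<not> length p \<ge> 4"
      then have "r = []" using pr by (cases r) auto
      then have "last p = y" using pr True by simp
      then show False using lp xyf by simp
    qed
    obtain w r' where rr: "r = w # r'" using l4 pr by (cases r) auto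
    define q where "q = y # w # r'"
    have hq: "hh y p = q" using pr True rr by (simp add: hh_def q_def)
    have pq: "p = i # x # q" using pr True rr by (simp add: q_def)
    have lq: "length p = length q + 2" by (simp add: pq)
    have qS: "\<And>j. q!j = p!(Suc (Suc j))" by (simp add: pq)
    have wx: "w \<noteq> x"
    proof
      assume "w = x"
      then have "{p!1, p!(1+1)} = {p!2, p!(2+1)}" using pr True rr by auto
      then show False using tp_injD[OF tp, of 1 2] l4 by simp
    qed
    have Y3: "\<And>j. j+1 < length p \<Longrightarrow> odd j \<Longrightarrow> 3 \<le> j \<Longrightarrow> p!j \<noteq> y \<and> p!(j+1) \<noteq> y"
    proof -
      have y3: "p!3 \<noteq> y" using tp_cons[OF tp, of 2] l4 pr True rr by auto
      have y4: "length p > 4 \<Longrightarrow> p!4 \<noteq> y"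
      proof
        assume "length p > 4" "p!4 = y"
        then have "{p!2, p!(2+1)} = {p!3, p!(3+1)}" using pr True by auto
        then show False using tp_injD[OF tp, of 2 3] \<open>length p > 4\<close> by simp
      qed
      fix j assume a: "j+1 < length p" "odd j" "3 \<le> j"
      show "p!j \<noteq> y \<and> p!(j+1) \<noteq> y"
      proof (cases "j = 3")
        case True then show ?thesis using y3 y4 a by simp
      next
        case False
        then have "3 < j" using a by simp
        then show ?thesis using G6e[of 3 j] a y3 y4 by simp
      qed
    qed
    have "is_tpath P2 D2 q"
    proof (rule tpI)
      show "length q \<ge> 2" using lq l4 by simp
      show "set q \<subseteq> P2"
      proof
        fix a assume "a \<in> set q"
        then obtain j where "j < length q" "q!j = a" by (auto simp: in_set_conv_nth)
        then show "a \<in> P2" using pP2[of "Suc (Suc j)"] qS lq by simp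
      qed
      show "hd q \<noteq> last q" using lp pq xyf by (simp add: q_def)
    next
      fix j assume "j+1 < length q"
      then show "q!j \<noteq> q!(j+1)" using tp_cons[OF tp, of "Suc (Suc j)"] qS lq by simp
    next
      have "inj_on (\<lambda>j. {(x#q)!j, (x#q)!(j+1)}) {j. j+1 < length (x#q)}"
        using tp_inj[OF tp] inj_cons[of "x#q" i] pq by simp
      then show "inj_on (\<lambda>j. {q!j, q!(j+1)}) {j. j+1 < length q}"
        using inj_cons[of q x] by (simp add: q_def)
    next
      fix j d assume "j+1 < length q" "d \<in> D2"
      then show "\<not> crosses (q!j, q!(j+1)) d" using tp_nc[OF tp, of "Suc (Suc j)" d] qS lq by simp
    next
      fix j assume a: "j+1 < length q" "odd j"
      have b: "Suc (Suc j) + 1 < length p" "odd (Suc (Suc j))" "3 \<le> Suc (Suc j)" using a lq odd_pos[of j] by auto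
      have hq': "hd q = y" "last q = k" using lp pq by (auto simp: q_def)
      show "(q!j, q!(j+1)) \<in> D2 \<and> crosses (q!j, q!(j+1)) (hd q, last q)"
        using toD2[OF b(1) b(2)] toyk[OF b(1) b(2)] Y3[OF b] qS hq' by simp
    next
      fix j1 j2 assume a: "j1 < j2" "j2+1 < length q" "odd j1" "odd j2"
      have hq': "hd q = y" "last q = k" using lp pq by (auto simp: q_def)
      have b1: "Suc (Suc j1) + 1 < length p" "odd (Suc (Suc j1))" "3 \<le> Suc (Suc j1)" using a lq odd_pos[of j1] by auto
      have b2: "Suc (Suc j2) + 1 < length p" "odd (Suc (Suc j2))" "3 \<le> Suc (Suc j2)" using a lq odd_pos[of j2] by auto
      show "closer (hd q) (last q) (q!j1, q!(j1+1)) (q!j2, q!(j2+1))"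
        using clyk[of "Suc (Suc j1)" "Suc (Suc j2)"] Y3[OF b1] Y3[OF b2] a lq qS hq' by simp
    qed
    moreover have "gg x q = p" using wx pq by (simp add: gg_def q_def)
    ultimately show ?thesis using hq lp pq by (simp add: tpaths_def q_def)
  next
    case False
    define q where "q = y # x # z # r"
    have hq: "hh y p = q" using pr False by (simp add: hh_def q_def)
    have lq: "length q = length p" by (simp add: q_def pr)
    have qS: "\<And>j. q!(Suc j) = p!(Suc j)" by (simp add: q_def pr)
    have Y1: "\<And>j. j+1 < length p \<Longrightarrow> odd j \<Longrightarrow> p!j \<noteq> y \<and> p!(j+1) \<noteq> y"
    proof -
      fix j assume a: "j+1 < length p" "odd j"
      have e1: "p!1 \<noteq> y" "p!(1+1) \<noteq> y" using pr False xyf by auto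
      show "p!j \<noteq> y \<and> p!(j+1) \<noteq> y"
      proof (cases "j = 1")
        case True then show ?thesis using e1 by simp
      next
        case F: False
        then have "1 < j" using a by (cases j) auto
        then show ?thesis using G6e[of 1 j] a e1 by simp
      qed
    qed
    have Yall: "\<And>j. 0 < j \<Longrightarrow> j < length p \<Longrightarrow> p!j \<noteq> y"
    proof -
      fix j assume a: "0 < j" "j < length p"
      show "p!j \<noteq> y"
      proof (cases "j = length p - 1")
        case True then show ?thesis using last_nth[of p] l3 lp xyf by simp
      next
        case F: False
        then obtain m where m: "odd m" "m+1 < length p" "m = j \<or> m+1 = j"
          using tp_vert[OF tp a F] by blast
        then show ?thesis using Y1[OF m(2) m(1)] by blast
      qed
    qed
    have "is_tpath P2 D2 q"
    proof (rule tpI)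
      show "length q \<ge> 2" using lq l3 by simp
      show "set q \<subseteq> P2"
      proof
        fix a assume "a \<in> set q"
        then obtain j where j: "j < length q" "q!j = a" by (auto simp: in_set_conv_nth)
        show "a \<in> P2"
        proof (cases j)
          case 0 then show ?thesis using j xyf by (simp add: q_def)
        next
          case (Suc m) then show ?thesis using pP2[of j] qS j lq by simp
        qed
      qed
      have "last q = k" using lp by (simp add: q_def pr)
      then show "hd q \<noteq> last q" using xyf by (simp add: q_def)
    next
      fix j assume j: "j+1 < length q"
      show "q!j \<noteq> q!(j+1)"
      proof (cases j)
        case 0 then show ?thesis using xyf by (simp add: q_def)
      next
        case (Suc m) then show ?thesis using tp_cons[OF tp, of j] qS j lq by simp
      qed
    next
      define l where "l = x # z # r"
      have lne: "l \<noteq> []" by (simp add: l_def)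
      have "inj_on (\<lambda>j. {l!j, l!(j+1)}) {j. j+1 < length l}"
        using tp_inj[OF tp] inj_cons[OF lne, of i] pr by (simp add: l_def)
      moreover have "\<forall>j. j+1 < length l \<longrightarrow> {y, l!0} \<noteq> {l!j, l!(j+1)}"
      proof (intro allI impI)
        fix j assume j: "j+1 < length l"
        have "l!j = p!(Suc j)" "l!(j+1) = p!(Suc (Suc j))" by (simp_all add: l_def pr)
        moreover have jl: "Suc (Suc j) < length p" using j pr by (simp add: l_def)
        moreover have "p!(Suc j) \<noteq> y" "p!(Suc (Suc j)) \<noteq> y"
          using Yall[of "Suc j"] Yall[of "Suc (Suc j)"] jl by auto
        ultimately have "y \<notin> {l!j, l!(j+1)}" by auto
        then show "{y, l!0} \<noteq> {l!j, l!(j+1)}" by auto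
      qed
      ultimately show "inj_on (\<lambda>j. {q!j, q!(j+1)}) {j. j+1 < length q}"
        using inj_cons[OF lne, of y] by (simp add: q_def l_def)
    next
      fix j d assume j: "j+1 < length q" and d: "d \<in> D2"
      show "\<not> crosses (q!j, q!(j+1)) d"
      proof (cases j)
        case 0
        obtain a b where ab: "d = (a,b)" by (cases d)
        have abP: "a \<in> P2" "b \<in> P2" using D2_P2 d ab by auto
        have "(y,x) \<in> {(t,v),(v,t)}" using xy by auto
        then show ?thesis using NC[OF abP] ab 0 by (simp add: q_def)
      next
        case (Suc m) then show ?thesis using tp_nc[OF tp, of j d] qS j lq d by simp
      qed
    next
      fix j assume a: "j+1 < length q" "odd j"
      then obtain m where m: "j = Suc m" by (cases j) auto
      have b: "j+1 < length p" using a lq by simp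
      have hq': "hd q = y" "last q = k" using lp by (auto simp: q_def pr)
      show "(q!j, q!(j+1)) \<in> D2 \<and> crosses (q!j, q!(j+1)) (hd q, last q)"
        using toD2[OF b a(2)] toyk[OF b a(2)] Y1[OF b a(2)] qS m hq' by simp
    next
      fix j1 j2 assume a: "j1 < j2" "j2+1 < length q" "odd j1" "odd j2"
      obtain m1 m2 where m: "j1 = Suc m1" "j2 = Suc m2" using a by (cases j1; cases j2) auto
      have hq': "hd q = y" "last q = k" using lp by (auto simp: q_def pr)
      have b2: "j2+1 < length p" using a lq by simp
      have b1: "j1+1 < length p" using a lq by simp
      show "closer (hd q) (last q) (q!j1, q!(j1+1)) (q!j2, q!(j2+1))"
        using clyk[OF a(1) b2 a(3) a(4)] Y1[OF b1 a(3)] Y1[OF b2 a(4)] qS m hq' by simp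
    qed
    moreover have "gg x q = p" by (simp add: gg_def q_def pr)
    ultimately show ?thesis using hq lp by (simp add: tpaths_def q_def pr)
  qed
qed

lemma inv:
  assumes xy: "XY x y" and q: "q \<in> tpaths P2 D2 y k"
  shows "hh y (gg x q) = q"
proof -
  from q have tq: "is_tpath P2 D2 q" and hq: "hd q = y" and lq: "last q = k"
    by (auto simp: tpaths_def)
  have lenq: "length q \<ge> 2" using tp_len[OF tq] .
  have xyf: "x \<noteq> y" "y \<noteq> k" "x \<noteq> k" using XY_P2[OF xy] by auto
  obtain r where qr: "q = y # r" using hq lenq by (cases q) auto
  show ?thesis
  proof (cases "q!1 = x")
    case True
    have l3: "length q \<ge> 3"
    proof (rule ccontr)
      assume "\<not> length q \<ge> 3"
      then have "length q = 2" using lenq by simp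
      then have "q!1 = k" using last_nth[of q] lq by simp
      then show False using True xyf by simp
    qed
    have "q!2 \<noteq> y" using tp_mid[OF tq, of 2] hq l3 by simp
    then show ?thesis using True qr by (simp add: gg_def hh_def)
  next
    case False
    then show ?thesis using qr by (simp add: gg_def hh_def)
  qed
qed

lemma coef:
  fixes c :: "nat \<Rightarrow> nat \<Rightarrow> 'a::ring_1"
  assumes xy: "XY x y" and q: "q \<in> tpaths P2 D2 y k" and u: "is_unit (c y x)"
  shows "tcoef c (gg x q) = c i x * rinv (c y x) * tcoef c q"
proof -
  from q have tq: "is_tpath P2 D2 q" and hq: "hd q = y" and lq: "last q = k"
    by (auto simp: tpaths_def)
  have lenq: "length q \<ge> 2" using tp_len[OF tq] .
  have xyf: "x \<noteq> y" "y \<noteq> k" "x \<noteq> k" using XY_P2[OF xy] by auto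
  obtain r where qr: "q = y # r" using hq lenq by (cases q) auto
  show ?thesis
  proof (cases "q!1 = x")
    case True
    have l3: "length q \<ge> 3"
    proof (rule ccontr)
      assume "\<not> length q \<ge> 3"
      then have "length q = 2" using lenq by simp
      then have "q!1 = k" using last_nth[of q] lq by simp
      then show False using True xyf by simp
    qed
    obtain z r2 where qq: "q = y # x # z # r2" using l3 qr True
      by (cases r; cases "tl r") auto
    have "c i x * rinv (c y x) * tcoef c q = c i x * (rinv (c y x) * c y x) * rinv (c z x) * tcoef c (z # r2)"
      using qq by (simp add: mult.assoc)
    also have "\<dots> = c i x * rinv (c z x) * tcoef c (z # r2)" using unit_rinv[OF u] by simp
    finally show ?thesis using True qq by (simp add: gg_def)
  next
    case False
    obtain w r' where "r = w # r'" using lenq qr by (cases r) auto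
    then show ?thesis using False qr by (simp add: gg_def)
  qed
qed

end

context L begin

lemma sumA:
  fixes c :: "nat \<Rightarrow> nat \<Rightarrow> 'a::ring_1"
  assumes xy: "XY x y" and u: "is_unit (c y x)"
  shows "(\<Sum>p\<in>{p \<in> tpaths {0..<n} DA i k. p!1 = x}. tcoef c p)
     = c i x * rinv (c y x) * (\<Sum>q\<in>tpaths P2 D2 y k. tcoef c q)"
proof -
  let ?T = "tpaths P2 D2 y k"
  have img: "{p \<in> tpaths {0..<n} DA i k. p!1 = x} = gg x ` ?T"
  proof (intro equalityI subsetI)
    fix p assume "p \<in> {p \<in> tpaths {0..<n} DA i k. p!1 = x}"
    then have "hh y p \<in> ?T \<and> gg x (hh y p) = p" using bwd[OF xy] by auto
    then show "p \<in> gg x ` ?T" by (metis image_eqI)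
  next
    fix p assume "p \<in> gg x ` ?T"
    then obtain q where "q \<in> ?T" "p = gg x q" by auto
    then show "p \<in> {p \<in> tpaths {0..<n} DA i k. p!1 = x}" using fwd[OF xy] by auto
  qed
  have inj: "inj_on (gg x) ?T" using inv[OF xy] by (rule inj_on_inverseI)
  have "(\<Sum>p\<in>gg x ` ?T. tcoef c p) = (\<Sum>q\<in>?T. tcoef c (gg x q))"
    using sum.reindex[OF inj] by simp
  also have "\<dots> = (\<Sum>q\<in>?T. c i x * rinv (c y x) * tcoef c q)"
    using coef[where c=c, OF xy _ u] by (rule sum.cong[OF refl])
  also have "\<dots> = c i x * rinv (c y x) * (\<Sum>q\<in>?T. tcoef c q)"
    by (rule sum_distrib_left[symmetric])
  finally show ?thesis using img by simp
qed

end

theorem lemma2p8: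
  fixes n t v :: nat and D2 :: "(nat \<times> nat) set" and c :: "nat \<Rightarrow> nat \<Rightarrow> 'a::ring_1"
  assumes "n \<ge> 3" and "t < n" and "v < n"
    and "dissection {0..<n} {(t,v),(v,t)}"
    and "dissection (side n v t) D2"
    and "\<forall>(r,s)\<in>{(t,v),(v,t)} \<union> D2. is_unit (c r s)"
    and "\<forall>i\<in>side n v t. \<forall>k\<in>side n v t. i \<noteq> k \<longrightarrow>
           c i k = (\<Sum>p\<in>tpaths (side n v t) D2 i k. tcoef c p)"
    and "weak_frieze n {(t,v),(v,t)} c"
  shows "\<forall>i\<in>side n t v - {t,v}. \<forall>k\<in>side n v t - {t,v}.
           c i k = (\<Sum>p\<in>tpaths {0..<n} ({(t,v),(v,t)} \<union> D2) i k. tcoef c p)"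
proof (intro ballI)
  fix i k assume i: "i \<in> side n t v - {t,v}" and k: "k \<in> side n v t - {t,v}"
  have hti: "cbtw t i v" "i < n" using i by (auto simp: side_def)
  have hvk: "cbtw v k t" "k < n" using k by (auto simp: side_def)
  interpret L n t v i k D2
    using assms(2,3,5) hti hvk by unfold_locales auto
  have uvt: "is_unit (c v t)" and utv: "is_unit (c t v)" using assms(6) by auto
  let ?Tp = "tpaths {0..<n} DA i k"
  have fin: "finite ?Tp" by (rule finite_tpaths) simp
  have spl: "?Tp = {p \<in> ?Tp. p!1 = t} \<union> {p \<in> ?Tp. p!1 = v}" using second_vertex by auto
  have disj: "{p \<in> ?Tp. p!1 = t} \<inter> {p \<in> ?Tp. p!1 = v} = {}" using basic by auto
  have "(\<Sum>p\<in>?Tp. tcoef c p) = (\<Sum>p\<in>{p \<in> ?Tp. p!1 = t}. tcoef c p) + (\<Sum>p\<in>{p \<in> ?Tp. p!1 = v}. tcoef c p)"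
    by (subst spl, rule sum.union_disjoint) (use fin disj in auto)
  also have "\<dots> = c i t * rinv (c v t) * (\<Sum>q\<in>tpaths P2 D2 v k. tcoef c q)
                 + c i v * rinv (c t v) * (\<Sum>q\<in>tpaths P2 D2 t k. tcoef c q)"
    using sumA[of t v c] sumA[of v t c] uvt utv by simp
  also have "\<dots> = c i t * rinv (c v t) * c v k + c i v * rinv (c t v) * c t k"
    using assms(7) vP2 tP2 kP2 basic by auto
  also have "\<dots> = c i k"
  proof -
    have cr: "crosses (i,k) (t,v)" using G_cross[OF hti(1) hvk(1)] .
    have A: "\<forall>i<n. \<forall>k<n. \<forall>r s. (r,s) \<in> {(t,v),(v,t)} \<longrightarrow> (s,r) \<in> {(t,v),(v,t)} \<longrightarrow> crosses (i,k) (r,s) \<longrightarrow>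
        c i k = c i r * rinv (c s r) * c s k + c i s * rinv (c r s) * c r k"
      using assms(8) unfolding weak_frieze_def by (rule conjunct2)
    have "c i k = c i t * rinv (c v t) * c v k + c i v * rinv (c t v) * c t k"
      by (rule A[rule_format, OF hti(2) hvk(2) _ _ cr]) simp_all
    then show ?thesis by simp
  qed
  finally show "c i k = (\<Sum>p\<in>?Tp. tcoef c p)" by simp
qed

end
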